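(* Suppose $|\mathit{Obs}|>1$ and $m\ge2$, and assume also $|\mathit{Obs}|\le m$ so that the class $\mathcal C$ below is nonempty. Let $\mathcal C$ be the class of $m$-agent models in which every observation $o\in\mathit{Obs}$ is the initial observation $\vec o_{\iota,a}$ of at least one agent $a$. Then there is a CTL*KΔ$_m$ formula $\varphi$ such that no CTL*K$_m$ formula $\varphi'$ satisfies: for every $M\in\mathcal C$, $M\models\varphi$ iff $M\models\varphi'$.
   Context: Fix a countably infinite set $\mathit{AP}$ of atomic propositions, a finite nonempty set $\mathit{Obs}$ of observations, and a finite set of agents $\mathit{Ag}=\{a_1,\dots,a_m\}$. For a word $w$ we write $w_i$ for its letter at position $i$ (positions start at $0$), $w_{\le i}$ for its prefix ending at position $i$, $|w|$ for its length (finite words) and $\mathit{last}(w)$ for its last letter; $w\preceq w'$ means $w$ is a prefix of $w'$. Syntax of CTL*KΔ$_m$: history formulas $\varphi::=p\mid\neg\varphi\mid\varphi\wedge\varphi\mid\mathbf A\psi\mid\mathbf K_a\varphi\mid\Delta^{o}_a\varphi$ and path formulas $\psi::=\varphi\mid\neg\psi\mid\psi\wedge\psi\mid\mathbf X\psi\mid\psi\,\mathbf U\,\psi$, with $p\in\mathit{AP}$, $a\in\mathit{Ag}$, $o\in\mathit{Obs}$; formulas are history formulas. CTL*K$_m$ is the fragment of formulas containing no operator $\Delta^o_a$. A multiagent model is $M=(\mathit{AP}_f,S,T,V,\{\sim_o\}_{o\in\mathit{Obs}},s_\iota,\vec o_\iota)$ where $\mathit{AP}_f\subseteq\mathit{AP}$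 is finite, $S$ is a finite set of states, $T\subseteq S\times S$ is left-total, $V:S\to2^{\mathit{AP}_f}$, each $\sim_o$ is an equivalence relation on $S$, $s_\iota\in S$, and $\vec o_\iota=(\vec o_{\iota,a})_{a\in\mathit{Ag}}\in\mathit{Obs}^{\mathit{Ag}}$ gives each agent an initial observation. Paths are infinite sequences of states $s_0s_1\dots$ with $s_iTs_{i+1}$ (starting anywhere); histories are finite nonempty prefixes of paths. An observation record is a finite word over $\mathit{Obs}\times\mathbb N$; $r_{=n}$ is the subword of $r$ consisting of the pairs with second component $n$. A record tuple is $\vec r=(\vec r_a)_{a\in\mathit{Ag}}$; $\vec r\cdot(o,n)_a$ is $\vec r$ with $\vec r_a$ replaced by $\vec r_a\cdot(o,n)$; $\vec\epsilon$ is the tuple of empty records. For agent $a$: $\mathit{ol}_a(\vec r,0)=\vec o_{\iota,a}\cdot o_1\cdots o_k$ if $(\vec r_a)_{=0}=(o_1,0)\cdots(o_k,0)$, and $\mathit{ol}_a(\vec r,n+1)=\mathit{last}(\mathit{ol}_a(\vec r,n))\cdot o_1\cdots o_k$ if $(\vec r_a)_{=n+1}=(o_1,n+1)\cdots(o_k,n+1)$. $h\approx^{\vec r}_a h'$ iff $|h|=|h'|$ and for all $i<|h|$ and all $o$ in $\mathit{ol}_a(\vec r,i)$, $h_i\sim_o h'_i$. Natural semantics: $h,\vec r\models p$ iff $p\in V(\mathit{last}(h))$; negation and conjunction as usual; $h,\vec r\models\mathbf A\psi$ iff for all paths $\pi$ with $h\preceq\pi$, $\pi,|h|-1,\vec r\models\psi$;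 $h,\vec r\models\mathbf K_a\varphi$ iff $h',\vec r\models\varphi$ for all histories $h'\approx^{\vec r}_a h$; $h,\vec r\models\Delta^o_a\varphi$ iff $h,\vec r\cdot(o,|h|-1)_a\models\varphi$; $\pi,n,\vec r\models\varphi$ iff $\pi_{\le n},\vec r\models\varphi$; negation and conjunction as usual; $\pi,n,\vec r\models\mathbf X\psi$ iff $\pi,n+1,\vec r\models\psi$; $\pi,n,\vec r\models\psi_1\mathbf U\psi_2$ iff there is $m'\ge n$ with $\pi,m',\vec r\models\psi_2$ and $\pi,j,\vec r\models\psi_1$ for all $n\le j<m'$. $M\models\varphi$ iff $s_\iota,\vec\epsilon\models\varphi$ ($s_\iota$ viewed as a one-state history). *)

theory Defs
  imports Main
begin

text \<open>Atomic propositions: AP = nat (countably infinite). Observations: a finite type 'o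
 (Obs = UNIV). Agents: a finite type 'a (Ag = UNIV, m = CARD('a)).
 States of models are natural numbers (every finite model is isomorphic to one of these).\<close>

datatype ('o, 'a) hform =
    Prop nat
  | HNeg "('o, 'a) hform"
  | HAnd "('o, 'a) hform" "('o, 'a) hform"
  | All "('o, 'a) pform"
  | Know 'a "('o, 'a) hform"
  | Delta 'o 'a "('o, 'a) hform"
and ('o, 'a) pform =
    HF "('o, 'a) hform"
  | PNeg "('o, 'a) pform"
  | PAnd "('o, 'a) pform" "('o, 'a) pform"
  | Next "('o, 'a) pform"
  | Until "('o, 'a) pform" "('o, 'a) pform"

fun delta_free_h :: "('o, 'a) hform \<Rightarrow> bool"
and delta_free_p :: "('o, 'a) pform \<Rightarrow> bool" where
  "delta_free_h (Prop p) = True"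
| "delta_free_h (HNeg f) = delta_free_h f"
| "delta_free_h (HAnd f g) = (delta_free_h f \<and> delta_free_h g)"
| "delta_free_h (All p) = delta_free_p p"
| "delta_free_h (Know a f) = delta_free_h f"
| "delta_free_h (Delta o' a f) = False"
| "delta_free_p (HF f) = delta_free_h f"
| "delta_free_p (PNeg p) = delta_free_p p"
| "delta_free_p (PAnd p q) = (delta_free_p p \<and> delta_free_p q)"
| "delta_free_p (Next p) = delta_free_p p"
| "delta_free_p (Until p q) = (delta_free_p p \<and> delta_free_p q)"

record ('o, 'a) model =
  apf :: "nat set"
  states :: "nat set"
  trans :: "(nat \<times> nat) set"
  val :: "nat \<Rightarrow> nat set"
  obsrel :: "'o \<Rightarrow> (nat \<times> nat) set"
  sinit :: nat
  oinit :: "'a \<Rightarrow> 'o"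

definition wf_model :: "('o, 'a) model \<Rightarrow> bool" where
  "wf_model M \<longleftrightarrow> finite (apf M) \<and> finite (states M) \<and>
     trans M \<subseteq> states M \<times> states M \<and>
     (\<forall>s\<in>states M. \<exists>t. (s, t) \<in> trans M) \<and>
     (\<forall>s. val M s \<subseteq> apf M) \<and>
     (\<forall>o'. equiv (states M) (obsrel M o')) \<and>
     sinit M \<in> states M"

definition is_path :: "('o, 'a) model \<Rightarrow> (nat \<Rightarrow> nat) \<Rightarrow> bool" where
  "is_path M \<pi> \<longleftrightarrow> (\<forall>i. \<pi> i \<in> states M \<and> (\<pi> i, \<pi> (Suc i)) \<in> trans M)"

definition is_history :: "('o, 'a) model \<Rightarrow> nat list \<Rightarrow> bool" where
  "is_history M h \<longleftrightarrow> h \<noteq> [] \<and> (\<exists>\<pi>. is_path M \<pi> \<and> h = map \<pi> [0..<length h])"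

type_synonym ('o, 'a) records = "'a \<Rightarrow> ('o \<times> nat) list"

fun ol :: "('o, 'a) model \<Rightarrow> ('o, 'a) records \<Rightarrow> 'a \<Rightarrow> nat \<Rightarrow> 'o list" where
  "ol M r a 0 = oinit M a # map fst (filter (\<lambda>p. snd p = 0) (r a))"
| "ol M r a (Suc n) = last (ol M r a n) # map fst (filter (\<lambda>p. snd p = Suc n) (r a))"

definition indist :: "('o, 'a) model \<Rightarrow> ('o, 'a) records \<Rightarrow> 'a \<Rightarrow> nat list \<Rightarrow> nat list \<Rightarrow> bool" where
  "indist M r a h h' \<longleftrightarrow> length h = length h' \<and>
     (\<forall>i<length h. \<forall>o'\<in>set (ol M r a i). (h ! i, h' ! i) \<in> obsrel M o')"

fun hsat :: "('o, 'a) model \<Rightarrow> nat list \<Rightarrow> ('o, 'a) records \<Rightarrow> ('o, 'a) hform \<Rightarrow> bool"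
and psat :: "('o, 'a) model \<Rightarrow> (nat \<Rightarrow> nat) \<Rightarrow> nat \<Rightarrow> ('o, 'a) records \<Rightarrow> ('o, 'a) pform \<Rightarrow> bool" where
  "hsat M h r (Prop p) = (p \<in> val M (last h))"
| "hsat M h r (HNeg f) = (\<not> hsat M h r f)"
| "hsat M h r (HAnd f g) = (hsat M h r f \<and> hsat M h r g)"
| "hsat M h r (All p) = (\<forall>\<pi>. is_path M \<pi> \<and> h = map \<pi> [0..<length h] \<longrightarrow> psat M \<pi> (length h - 1) r p)"
| "hsat M h r (Know a f) = (\<forall>h'. is_history M h' \<and> indist M r a h h' \<longrightarrow> hsat M h' r f)"
| "hsat M h r (Delta o' a f) = hsat M h (r(a := r a @ [(o', length h - 1)])) f"
| "psat M \<pi> n r (HF f) = hsat M (map \<pi> [0..<Suc n]) r f"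
| "psat M \<pi> n r (PNeg p) = (\<not> psat M \<pi> n r p)"
| "psat M \<pi> n r (PAnd p q) = (psat M \<pi> n r p \<and> psat M \<pi> n r q)"
| "psat M \<pi> n r (Next p) = psat M \<pi> (Suc n) r p"
| "psat M \<pi> n r (Until p q) = (\<exists>m\<ge>n. psat M \<pi> m r q \<and> (\<forall>j. n \<le> j \<and> j < m \<longrightarrow> psat M \<pi> j r p))"

definition models :: "('o, 'a) model \<Rightarrow> ('o, 'a) hform \<Rightarrow> bool" where
  "models M f \<longleftrightarrow> hsat M [sinit M] (\<lambda>_. []) f"

definition in_class_C :: "('o, 'a) model \<Rightarrow> bool" where
  "in_class_C M \<longleftrightarrow> wf_model M \<and> (\<forall>o'. \<exists>a. oinit M a = o')"

end

theory Submission
  imports Defs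
begin

definition SS :: "nat set" where "SS = {0,1,2,3}"

definition M1 :: "'o \<Rightarrow> 'o \<Rightarrow> ('a \<Rightarrow> 'o) \<Rightarrow> ('o, 'a) model" where
 "M1 o1 o2 oi = \<lparr>apf = {0}, states = SS, trans = SS \<times> SS,
    val = (\<lambda>s. if s = 0 \<or> s = 3 then {0} else {}),
    obsrel = (\<lambda>o'. if o' = o1 then {(x,y). x \<in> SS \<and> y \<in> SS \<and> (x < 2 \<longleftrightarrow> y < 2)}
                   else if o' = o2 then {(x,y). x \<in> SS \<and> y \<in> SS \<and> (even x \<longleftrightarrow> even y)}
                   else SS \<times> SS),
    sinit = 0, oinit = oi\<rparr>"

definition M2 :: "('a \<Rightarrow> 'o) \<Rightarrow> ('o, 'a) model" where
 "M2 oi = \<lparr>apf = {0}, states = {0,1}, trans = {0,1} \<times> {0,1},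
    val = (\<lambda>s. if s = 0 then {0} else {}),
    obsrel = (\<lambda>o'. {0,1} \<times> {0,1}),
    sinit = 0, oinit = oi\<rparr>"

definition fm :: "nat \<Rightarrow> nat" where "fm s = (if s = 0 \<or> s = 3 then 0 else 1)"

lemma M1_simps[simp]: "states (M1 o1 o2 oi) = SS" "trans (M1 o1 o2 oi) = SS \<times> SS"
  "val (M1 o1 o2 oi) = (\<lambda>s. if s = 0 \<or> s = 3 then {0} else {})"
  "sinit (M1 o1 o2 oi) = 0" "oinit (M1 o1 o2 oi) = oi" "apf (M1 o1 o2 oi) = {0}"
  by (simp_all add: M1_def)

lemma M2_simps[simp]: "states (M2 oi) = {0,1}" "trans (M2 oi) = {0,1} \<times> {0,1}"
  "val (M2 oi) = (\<lambda>s. if s = 0 then {0} else {})" "obsrel (M2 oi) o' = {0,1} \<times> {0,1}"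
  "sinit (M2 oi) = 0" "oinit (M2 oi) = oi" "apf (M2 oi) = {0}"
  by (simp_all add: M2_def)

lemma ol_empty: "ol M (\<lambda>_. []) a i = [oinit M a]"
  by (induct i) auto

lemma equiv_kernel: "equiv S {(x,y). x \<in> S \<and> y \<in> S \<and> k x = k y}"
  by (auto simp: equiv_def refl_on_def sym_def Relation.trans_def)

lemma equiv_univ: "equiv S (S \<times> S)"
  by (auto simp: equiv_def refl_on_def sym_def Relation.trans_def)

lemma obsA: "obsrel (M1 o1 o2 oi) o1 = {(x,y). x \<in> SS \<and> y \<in> SS \<and> (x < 2) = (y < 2)}"
  "o1 \<noteq> o2 \<Longrightarrow> obsrel (M1 o1 o2 oi) o2 = {(x,y). x \<in> SS \<and> y \<in> SS \<and> (even x) = (even y)}"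
  "o' \<noteq> o1 \<Longrightarrow> o' \<noteq> o2 \<Longrightarrow> obsrel (M1 o1 o2 oi) o' = SS \<times> SS"
  by (simp_all add: M1_def)

lemma obs_sub: "obsrel (M1 o1 o2 oi) o' \<subseteq> SS \<times> SS"
  by (auto simp: M1_def)

lemma wf1: "o1 \<noteq> o2 \<Longrightarrow> wf_model (M1 o1 o2 oi)"
proof -
  assume ne: "o1 \<noteq> o2"
  have "equiv SS (obsrel (M1 o1 o2 oi) o')" for o'
  proof (cases "o' = o1")
    case True then show ?thesis using obsA(1)[of o1 o2 oi] equiv_kernel[of SS "\<lambda>x. x < 2"] by simp
  next
    case F: False
    show ?thesis
    proof (cases "o' = o2")
      case True then show ?thesis using obsA(2)[OF ne, of oi] equiv_kernel[of SS "\<lambda>x. even x"] by simp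
    next
      case False then show ?thesis using obsA(3)[OF F False, of oi] equiv_univ[of SS] by simp
    qed
  qed
  moreover have "finite SS" "0 \<in> SS" by (simp_all add: SS_def)
  ultimately show ?thesis unfolding wf_model_def by auto
qed

lemma wf2: "wf_model (M2 oi)"
  unfolding wf_model_def using equiv_univ[of "{0::nat,1}"] by auto

lemma lift_ex: "s \<in> SS \<Longrightarrow> b \<in> {0,1} \<Longrightarrow> \<exists>t. (s,t) \<in> obsrel (M1 o1 o2 oi) o' \<and> fm t = b"
proof -
  assume s: "s \<in> SS" and b: "b \<in> {0,1}"
  have c: "s = 0 \<or> s = 1 \<or> s = 2 \<or> s = 3" using s unfolding SS_def by auto
  have bb: "b = 0 \<or> b = 1" using b by auto
  show ?thesis
  proof (cases "o' = o1")
    case True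
    let ?t = "if s < 2 then (if b = 0 then 0 else 1) else (if b = 0 then 3 else 2::nat)"
    have "(s, ?t) \<in> obsrel (M1 o1 o2 oi) o' \<and> fm ?t = b"
      unfolding True obsA(1) using c bb by (auto simp: SS_def fm_def)
    then show ?thesis by blast
  next
    case F: False
    show ?thesis
    proof (cases "o' = o2")
      case True
      let ?t = "if even s then (if b = 0 then 0 else 2) else (if b = 0 then 3 else 1::nat)"
      have "(s, ?t) \<in> obsrel (M1 o1 o2 oi) o' \<and> fm ?t = b"
        unfolding True obsA(2)[OF F[unfolded True, symmetric]] using c bb by (auto simp: SS_def fm_def)
      then show ?thesis by blast
    next
      case False
      let ?t = "if b = 0 then 0 else 1::nat"
      have "(s, ?t) \<in> obsrel (M1 o1 o2 oi) o' \<and> fm ?t = b"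
        unfolding obsA(3)[OF F False] using s bb by (auto simp: SS_def fm_def)
      then show ?thesis by blast
    qed
  qed
qed

lemma path1: "is_path (M1 o1 o2 oi) \<pi> \<longleftrightarrow> (\<forall>i. \<pi> i \<in> SS)"
  by (auto simp: is_path_def)

lemma path2: "is_path (M2 oi) \<pi> \<longleftrightarrow> (\<forall>i. \<pi> i \<in> {0,1})"
  unfolding is_path_def M2_simps by blast

lemma fm01: "fm s \<in> {0,1}" by (simp add: fm_def)

lemma hist1: "is_history (M1 o1 o2 oi) h \<longleftrightarrow> h \<noteq> [] \<and> set h \<subseteq> SS"
proof
  assume "is_history (M1 o1 o2 oi) h"
  then obtain \<pi> where "h \<noteq> []" "\<forall>i. \<pi> i \<in> SS" "h = map \<pi> [0..<length h]"
    by (auto simp: is_history_def path1)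
  then show "h \<noteq> [] \<and> set h \<subseteq> SS" by (metis image_subsetI set_map)
next
  assume a: "h \<noteq> [] \<and> set h \<subseteq> SS"
  let ?p = "\<lambda>i. if i < length h then h ! i else 0"
  have "\<forall>i<length h. h ! i \<in> SS" using a by (metis nth_mem subsetD)
  then have "\<forall>i. ?p i \<in> SS" by (auto simp: SS_def)
  moreover have "h = map ?p [0..<length h]" by (rule nth_equalityI) auto
  ultimately show "is_history (M1 o1 o2 oi) h" unfolding is_history_def path1 using a by (intro conjI exI[of _ ?p]) blast+
qed

lemma hist2: "is_history (M2 oi) h \<longleftrightarrow> h \<noteq> [] \<and> set h \<subseteq> {0,1}"
proof
  assume "is_history (M2 oi) h"
  then obtain \<pi> where "h \<noteq> []" "\<forall>i. \<pi> i \<in> {0,1}" "h = map \<pi> [0..<length h]"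
    unfolding is_history_def path2 by blast
  then show "h \<noteq> [] \<and> set h \<subseteq> {0,1}" by (metis image_subsetI set_map)
next
  assume a: "h \<noteq> [] \<and> set h \<subseteq> {0,1}"
  let ?p = "\<lambda>i. if i < length h then h ! i else 0"
  have "\<forall>i<length h. h ! i \<in> {0,1}" using a by (metis nth_mem subsetD)
  then have "\<forall>i. ?p i \<in> {0,1}" by auto
  moreover have "h = map ?p [0..<length h]" by (rule nth_equalityI) auto
  ultimately show "is_history (M2 oi) h" unfolding is_history_def path2 using a by (intro conjI exI[of _ ?p]) blast+
qed

lemma transfer:
  shows "(\<forall>h. h \<noteq> [] \<longrightarrow> set h \<subseteq> SS \<longrightarrow> delta_free_h \<phi> \<longrightarrow>
      (hsat (M1 o1 o2 oi) h (\<lambda>_. []) \<phi> \<longleftrightarrow> hsat (M2 oi) (map fm h) (\<lambda>_. []) \<phi>))"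
 and "(\<forall>\<pi> n. (\<forall>i. \<pi> i \<in> SS) \<longrightarrow> delta_free_p \<psi> \<longrightarrow>
      (psat (M1 o1 o2 oi) \<pi> n (\<lambda>_. []) \<psi> \<longleftrightarrow> psat (M2 oi) (fm \<circ> \<pi>) n (\<lambda>_. []) \<psi>))"
proof (induction \<phi> and \<psi>)
  case (Prop p)
  show ?case by (auto simp: last_map fm_def)
next
  case (HNeg f) then show ?case by simp
next
  case (HAnd f g) then show ?case by simp
next
  case (All p)
  show ?case
  proof (intro allI impI)
    fix h :: "nat list"
    assume hne: "h \<noteq> []" and hs: "set h \<subseteq> SS" and df: "delta_free_h (All p)"
    then have dfp: "delta_free_p p" by simp
    show "hsat (M1 o1 o2 oi) h (\<lambda>_. []) (All p) \<longleftrightarrow> hsat (M2 oi) (map fm h) (\<lambda>_. []) (All p)"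
    proof
      assume L: "hsat (M1 o1 o2 oi) h (\<lambda>_. []) (All p)"
      show "hsat (M2 oi) (map fm h) (\<lambda>_. []) (All p)"
      proof (simp only: hsat.simps, intro allI impI)
        fix \<pi>' assume a: "is_path (M2 oi) \<pi>' \<and> map fm h = map \<pi>' [0..<length (map fm h)]"
        define \<pi> where "\<pi> i = (if i < length h then h ! i else if \<pi>' i = 0 then 0 else 1)" for i
        have "\<forall>i<length h. h ! i \<in> SS" using hs by (metis nth_mem subsetD)
        then have p1: "\<forall>i. \<pi> i \<in> SS" by (auto simp: \<pi>_def SS_def)
        have heq: "h = map \<pi> [0..<length h]" by (rule nth_equalityI) (simp_all add: \<pi>_def)
        have "fm \<circ> \<pi> = \<pi>'"
        proof
          fix i
          show "(fm \<circ> \<pi>) i = \<pi>' i"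
          proof (cases "i < length h")
            case True
            have "map fm h ! i = map \<pi>' [0..<length (map fm h)] ! i" using a by simp
            then show ?thesis using True by (simp add: \<pi>_def)
          next
            case False
            have "\<pi>' i \<in> {0,1}" using a unfolding path2 by blast
            then show ?thesis using False by (auto simp: \<pi>_def fm_def)
          qed
        qed
        moreover have "psat (M1 o1 o2 oi) \<pi> (length h - 1) (\<lambda>_. []) p"
          using L p1 heq by (auto simp: path1)
        ultimately show "psat (M2 oi) \<pi>' (length (map fm h) - 1) (\<lambda>_. []) p"
          using All.IH p1 dfp by auto
      qed
    next
      assume R: "hsat (M2 oi) (map fm h) (\<lambda>_. []) (All p)"
      show "hsat (M1 o1 o2 oi) h (\<lambda>_. []) (All p)"
      proof (simp only: hsat.simps, intro allI impI)
        fix \<pi> assume a: "is_path (M1 o1 o2 oi) \<pi> \<and> h = map \<pi> [0..<length h]"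
        then have p1: "\<forall>i. \<pi> i \<in> SS" by (simp add: path1)
        have "is_path (M2 oi) (fm \<circ> \<pi>)" using fm01 by (simp add: path2)
        moreover have "map fm h = map (fm \<circ> \<pi>) [0..<length (map fm h)]"
          using a by (metis length_map map_map)
        ultimately have "psat (M2 oi) (fm \<circ> \<pi>) (length h - 1) (\<lambda>_. []) p" using R by auto
        then show "psat (M1 o1 o2 oi) \<pi> (length h - 1) (\<lambda>_. []) p"
          using All.IH p1 dfp by (auto simp: comp_def)
      qed
    qed
  qed
next
  case (Know a f)
  show ?case
  proof (intro allI impI)
    fix h :: "nat list"
    assume hne: "h \<noteq> []" and hs: "set h \<subseteq> SS" and df: "delta_free_h (Know a f)"
    then have dff: "delta_free_h f" by simp
    show "hsat (M1 o1 o2 oi) h (\<lambda>_. []) (Know a f) \<longleftrightarrow> hsat (M2 oi) (map fm h) (\<lambda>_. []) (Know a f)"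
    proof
      assume L: "hsat (M1 o1 o2 oi) h (\<lambda>_. []) (Know a f)"
      show "hsat (M2 oi) (map fm h) (\<lambda>_. []) (Know a f)"
      proof (simp only: hsat.simps, intro allI impI)
        fix h'' assume b: "is_history (M2 oi) h'' \<and> indist (M2 oi) (\<lambda>_. []) a (map fm h) h''"
        then have h''s: "set h'' \<subseteq> {0,1}" and len: "length h'' = length h"
          by (auto simp: hist2 indist_def)
        define lift where "lift s c = (SOME t. (s,t) \<in> obsrel (M1 o1 o2 oi) (oi a) \<and> fm t = c)" for s c
        have liftp: "(s, lift s c) \<in> obsrel (M1 o1 o2 oi) (oi a) \<and> fm (lift s c) = c"
          if "s \<in> SS" "c \<in> {0,1}" for s c
          unfolding lift_def by (rule someI_ex, rule lift_ex[OF that])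
        define h' where "h' = map (\<lambda>i. lift (h ! i) (h'' ! i)) [0..<length h]"
        have hi: "h ! i \<in> SS" if "i < length h" for i using hs that by auto
        have hi'': "h'' ! i \<in> {0,1}" if "i < length h" for i using h''s that len
          by (metis nth_mem subsetD)
        have "lift (h ! i) (h'' ! i) \<in> SS" if "i < length h" for i
          using liftp[OF hi[OF that] hi''[OF that]] obs_sub[of o1 o2 oi "oi a"] by blast
        then have h's: "set h' \<subseteq> SS" unfolding h'_def by auto
        have h'ne: "h' \<noteq> []" using hne by (simp add: h'_def)
        have ind: "indist (M1 o1 o2 oi) (\<lambda>_. []) a h h'"
          using liftp hi hi'' by (simp add: indist_def ol_empty h'_def)
        have meq: "map fm h' = h''"
          using liftp hi hi'' len by (intro nth_equalityI) (auto simp: h'_def)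
        have "hsat (M1 o1 o2 oi) h' (\<lambda>_. []) f"
          using L ind h's h'ne by (auto simp: hist1)
        then show "hsat (M2 oi) h'' (\<lambda>_. []) f"
          using Know.IH h's h'ne dff meq by auto
      qed
    next
      assume R: "hsat (M2 oi) (map fm h) (\<lambda>_. []) (Know a f)"
      show "hsat (M1 o1 o2 oi) h (\<lambda>_. []) (Know a f)"
      proof (simp only: hsat.simps, intro allI impI)
        fix h' assume b: "is_history (M1 o1 o2 oi) h' \<and> indist (M1 o1 o2 oi) (\<lambda>_. []) a h h'"
        then have h's: "set h' \<subseteq> SS" and h'ne: "h' \<noteq> []" and len: "length h' = length h"
          by (auto simp: hist1 indist_def)
        have "is_history (M2 oi) (map fm h')" using h'ne by (auto simp: hist2 fm_def)
        moreover have "indist (M2 oi) (\<lambda>_. []) a (map fm h) (map fm h')"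
          using len by (simp add: indist_def ol_empty fm_def)
        ultimately have "hsat (M2 oi) (map fm h') (\<lambda>_. []) f" using R by auto
        then show "hsat (M1 o1 o2 oi) h' (\<lambda>_. []) f"
          using Know.IH h's h'ne dff by auto
      qed
    qed
  qed
next
  case (Delta o' a f) then show ?case by simp
next
  case (HF f)
  show ?case
  proof (intro allI impI)
    fix \<pi> :: "nat \<Rightarrow> nat" and n :: nat assume p: "\<forall>i. \<pi> i \<in> SS" and d: "delta_free_p (HF f)"
    have "set (map \<pi> [0..<Suc n]) \<subseteq> SS" using p by auto
    then show "psat (M1 o1 o2 oi) \<pi> n (\<lambda>_. []) (HF f) \<longleftrightarrow> psat (M2 oi) (fm \<circ> \<pi>) n (\<lambda>_. []) (HF f)"
      using HF.IH d by (simp del: upt_Suc)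
  qed
next
  case (PNeg p) then show ?case by simp
next
  case (PAnd p q) then show ?case by simp
next
  case (Next p) then show ?case by simp
next
  case (Until p q) then show ?case by simp
qed


lemma modA: assumes "o1 \<noteq> o2" "oi a1 = o1"
  shows "models (M1 o1 o2 oi) (Delta o2 a1 (Know a1 (Prop 0)))"
proof -
  have "0 \<in> val (M1 o1 o2 oi) (last h')"
    if h: "is_history (M1 o1 o2 oi) h'" and i: "indist (M1 o1 o2 oi) ((\<lambda>_. [])(a1 := [(o2, 0)])) a1 [0] h'" for h'
  proof -
    have l: "length h' = 1" using i by (simp add: indist_def)
    have "(0, h' ! 0) \<in> obsrel (M1 o1 o2 oi) o1" "(0, h' ! 0) \<in> obsrel (M1 o1 o2 oi) o2"
      using i assms by (auto simp: indist_def)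
    then have "h' ! 0 = 0" using assms(1) by (auto simp: obsA(1) obsA(2)[OF assms(1)] SS_def)
    moreover have "h' = [h' ! 0]" using l by (metis One_nat_def length_0_conv length_Suc_conv nth_Cons_0)
    ultimately have "h' = [0]" by simp
    then show ?thesis by simp
  qed
  then show ?thesis by (simp add: models_def)
qed

lemma modB: "\<not> models (M2 oi) (Delta o2 a1 (Know a1 (Prop 0)))"
proof -
  have 1: "is_history (M2 oi) [1]" by (simp add: hist2)
  have 2: "indist (M2 oi) ((\<lambda>_. [])(a1 := [(o2, 0)])) a1 [0] [1]" by (simp add: indist_def)
  have 3: "\<not> hsat (M2 oi) [1] ((\<lambda>_. [])(a1 := [(o2, 0)])) (Prop 0)" by simp
  show ?thesis unfolding models_def hsat.simps using 1 2 3 by fastforce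
qed

theorem mainTheorem10:
  fixes dummy_o :: "'o::finite" and dummy_a :: "'a::finite"
  assumes "card (UNIV :: 'o set) > 1"
    and "card (UNIV :: 'a set) \<ge> 2"
    and "card (UNIV :: 'o set) \<le> card (UNIV :: 'a set)"
  shows "\<exists>\<phi> :: ('o, 'a) hform. \<not> (\<exists>\<phi>'. delta_free_h \<phi>' \<and>
           (\<forall>M :: ('o, 'a) model. in_class_C M \<longrightarrow> (models M \<phi> \<longleftrightarrow> models M \<phi>')))"
proof -
  obtain g :: "'o \<Rightarrow> 'a" where "g ` UNIV \<subseteq> UNIV" "inj_on g UNIV"
    using card_le_inj[OF finite_UNIV finite_UNIV assms(3)] by blast
  then have sj: "surj (inv g)" by (simp add: inj_imp_surj_inv)
  define oi where "oi = inv g"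
  define a1 :: 'a where "a1 = undefined"
  define o1 where "o1 = oi a1"
  have "\<exists>o2. o2 \<noteq> o1"
  proof (rule ccontr)
    assume "\<not> ?thesis"
    then have "(UNIV :: 'o set) = {o1}" by auto
    then have "card (UNIV :: 'o set) = 1" by (metis card.empty card_insert_disjoint empty_iff finite.emptyI One_nat_def)
    then show False using assms(1) by simp
  qed
  then obtain o2 where ne: "o2 \<noteq> o1" by blast
  let ?A = "M1 o1 o2 oi :: ('o,'a) model"
  let ?B = "M2 oi :: ('o,'a) model"
  have cA: "in_class_C ?A" using wf1[of o1 o2 oi] ne sj
    by (auto simp: in_class_C_def oi_def surj_def) (metis)
  have cB: "in_class_C ?B" using wf2[of oi] sj
    by (auto simp: in_class_C_def oi_def surj_def) (metis)
  show ?thesis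
  proof (intro exI[of _ "Delta o2 a1 (Know a1 (Prop 0))"] notI)
    assume "\<exists>\<phi>'. delta_free_h \<phi>' \<and> (\<forall>M :: ('o, 'a) model. in_class_C M \<longrightarrow>
        (models M (Delta o2 a1 (Know a1 (Prop 0))) \<longleftrightarrow> models M \<phi>'))"
    then obtain \<phi>' where df: "delta_free_h \<phi>'" and eq: "\<forall>M :: ('o, 'a) model. in_class_C M \<longrightarrow>
        (models M (Delta o2 a1 (Know a1 (Prop 0))) \<longleftrightarrow> models M \<phi>')" by blast
    have mA: "models ?A (Delta o2 a1 (Know a1 (Prop 0)))"
      by (rule modA[of o1 o2 oi a1, OF ne[symmetric] o1_def[symmetric]])
    have "models ?A \<phi>'" using eq[rule_format, OF cA] mA by blast
    moreover have "\<not> models ?B \<phi>'" using eq[rule_format, OF cB] modB[of oi o2 a1] by blast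
    moreover have "hsat ?A [0] (\<lambda>_. []) \<phi>' \<longleftrightarrow> hsat ?B (map fm [0]) (\<lambda>_. []) \<phi>'"
      using transfer(1)[of \<phi>' o1 o2 oi] df by (simp add: SS_def)
    then have "models ?A \<phi>' \<longleftrightarrow> models ?B \<phi>'"
      by (simp add: models_def fm_def)
    ultimately show False by simp
  qed
qed

end
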